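(* Assume $\sigma_1(x)=\sigma_1'(0)(x-a_1)$ with $\sigma_1'(0)\ne0$ and $a_1\ne0$ real, and that $\sigma_2(x)=\tfrac12\sigma_2''(0)(x-a_2)(x-b_2)$ (where $\tfrac12\sigma_2''(0)=(q-1)\tau'(0)$) has real zeros with $a_2<0<a_1<b_2$; assume $\Lambda_q:=\tau'(0)/\sigma_1'(0)<0$. Put $a=b_2$ and $$\rho(x)=|x|^{\alpha}\sqrt{x^{\log_qx-1}}\,\frac{(qa_2/x,\,qa/x;q)_\infty}{(a_1/x;q)_\infty},\qquad q^{\alpha}=\frac{q^{-2}\tfrac12\sigma_2''(0)}{\sigma_1'(0)}.$$ Then there exist polynomials $P_n$, $n\in\mathbb{N}_0$, with $P_n$ of degree $n$ a solution of the q-EHT with $\lambda=\lambda_n$, and nonzero constants $d_n^2$, such that for all $m,n\in\mathbb{N}_0$ $$\int_a^{\infty}P_n(x)P_m(x)\rho(x)\,d_{q^{-1}}x=d_n^2\delta_{mn},$$ i.e. orthogonality with respect to $\rho$ supported on $\{q^{-k}a\}_{k\in\mathbb{N}_0}$.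
   Context: Throughout $0<q<1$. For a function $y$ and $\zeta\in\{q,q^{-1}\}$, $D_\zeta y(x)=\frac{y(x)-y(\zeta x)}{(1-\zeta)x}$ for $x\ne0$ and $D_\zeta y(0)=y'(0)$; $[n]_q=\frac{1-q^n}{1-q}$. Let $\sigma_1$ be a real polynomial of degree at most two, $\tau(x)=\tau'(0)x+\tau(0)$ a real polynomial with $\tau'(0)\ne0$, and $\sigma_2(x):=q[\sigma_1(x)+(1-q^{-1})x\tau(x)]$. The q-EHT with parameter $n$ is $\sigma_1(x)D_{q^{-1}}D_qy(x)+\tau(x)D_qy(x)+\lambda_ny(x)=0$, $\lambda_n=-[n]_q\big(\tau'(0)+\tfrac12[n-1]_{q^{-1}}\sigma_1''(0)\big)$. $(\beta;q)_\infty=\prod_{k\ge0}(1-\beta q^k)$, $(\beta_1,\dots,\beta_r;q)_\infty=\prod_i(\beta_i;q)_\infty$. For $q^\alpha=c$ ($c\ne0$), $\alpha$ is any complex number with $e^{\alpha\ln q}=c$ and $|x|^\alpha:=e^{\alpha\ln|x|}$; for $x>0$, $\sqrt{x^{\log_qx-1}}:=\exp\big(\tfrac12(\log_qx-1)\ln x\big)$. For $a>0$, $\int_a^\infty f(x)\,d_{q^{-1}}x=(q^{-1}-1)a\sum_{j\ge0}q^{-j}f(q^{-j}a)$. *)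

theory Defs
  imports "HOL-Analysis.Analysis" "HOL-Computational_Algebra.Polynomial"
begin

definition qD :: "real \<Rightarrow> (real \<Rightarrow> real) \<Rightarrow> real \<Rightarrow> real" where
  "qD \<zeta> y x = (if x = 0 then deriv y 0 else (y x - y (\<zeta> * x)) / ((1 - \<zeta>) * x))"

definition qnum :: "real \<Rightarrow> int \<Rightarrow> real" where
  "qnum q k = (1 - q powi k) / (1 - q)"

definition qlambda :: "real \<Rightarrow> real poly \<Rightarrow> real poly \<Rightarrow> nat \<Rightarrow> real" where
  "qlambda q \<sigma>1 \<tau> n =
     - qnum q (int n) * (poly (pderiv \<tau>) 0
        + 1/2 * qnum (1/q) (int n - 1) * poly (pderiv (pderiv \<sigma>1)) 0)"

definition qEHT :: "real \<Rightarrow> real poly \<Rightarrow> real poly \<Rightarrow> nat \<Rightarrow> (real \<Rightarrow> real) \<Rightarrow> bool" where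
  "qEHT q \<sigma>1 \<tau> n y \<longleftrightarrow>
     (\<forall>x. poly \<sigma>1 x * qD (1/q) (qD q y) x + poly \<tau> x * qD q y x + qlambda q \<sigma>1 \<tau> n * y x = 0)"

definition qpoch_inf :: "real \<Rightarrow> real \<Rightarrow> real" where
  "qpoch_inf \<beta> q = (\<Prod>k. 1 - \<beta> * q ^ k)"

definition rho_w :: "real \<Rightarrow> complex \<Rightarrow> real \<Rightarrow> real \<Rightarrow> real \<Rightarrow> real \<Rightarrow> complex" where
  "rho_w q \<alpha> a1 a2 a x =
     exp (\<alpha> * complex_of_real (ln \<bar>x\<bar>))
     * complex_of_real (exp (1/2 * (log q x - 1) * ln x)
        * (qpoch_inf (q * a2 / x) q * qpoch_inf (q * a / x) q) / qpoch_inf (a1 / x) q)"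

text \<open>The Jackson q-integral from a to infinity, int_a^oo f d_{q^-1}x, converges to I:
  (q^-1 - 1) a sum_j q^-j f(q^-j a) sums to I.\<close>
definition has_qint_inf :: "real \<Rightarrow> real \<Rightarrow> (real \<Rightarrow> complex) \<Rightarrow> complex \<Rightarrow> bool" where
  "has_qint_inf q a f I \<longleftrightarrow>
     (\<lambda>j. complex_of_real ((1/q - 1) * a * (1/q) ^ j) * f ((1/q) ^ j * a)) sums I"

end

theory Submission
  imports Defs
begin


definition qn :: "real \<Rightarrow> nat \<Rightarrow> real" where "qn z k = (1 - z ^ k) / (1 - z)"

definition Dz :: "real \<Rightarrow> real poly \<Rightarrow> real poly" where
  "Dz z p = Abs_poly (\<lambda>i. if i \<le> degree p then qn z (i+1) * coeff p (i+1) else 0)"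

lemma coeff_Dz: "coeff (Dz z p) i = qn z (i+1) * coeff p (i+1)"
  unfolding Dz_def coeff_Abs_poly_If_le by (auto simp: coeff_eq_0)

lemma poly_bound_sum: "degree (p::real poly) \<le> N \<Longrightarrow> poly p x = (\<Sum>i\<le>N. coeff p i * x ^ i)"
proof -
  assume "degree p \<le> N"
  then have "(\<Sum>i\<le>N. coeff p i * x ^ i) = (\<Sum>i\<le>degree p. coeff p i * x ^ i)"
    by (intro sum.mono_neutral_right) (auto simp: coeff_eq_0)
  then show ?thesis using poly_altdef[of p x] by linarith
qed

lemma degree_Dz: "degree (Dz z p) \<le> degree p"
  by (rule degree_le) (auto simp: coeff_Dz coeff_eq_0)

lemma poly_Dz: assumes "x \<noteq> 0" "z \<noteq> 1"
  shows "poly (Dz z p) x = (poly p x - poly p (z * x)) / ((1 - z) * x)"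
proof -
  let ?d = "degree p"
  have "(1 - z) * x * poly (Dz z p) x = (\<Sum>i\<le>?d. (1 - z) * x * (qn z (i+1) * coeff p (i+1) * x ^ i))"
    by (simp add: poly_bound_sum[OF degree_Dz] coeff_Dz sum_distrib_left)
  also have "\<dots> = (\<Sum>i\<le>?d. (1 - z ^ Suc i) * coeff p (Suc i) * x ^ Suc i)"
    using assms by (intro sum.cong) (auto simp: qn_def field_simps)
  also have "\<dots> = (\<Sum>i\<le>Suc ?d. (1 - z ^ i) * coeff p i * x ^ i)"
    by (subst sum.atMost_Suc_shift) simp
  also have "\<dots> = (\<Sum>i\<le>Suc ?d. coeff p i * x ^ i) - (\<Sum>i\<le>Suc ?d. coeff p i * (z * x) ^ i)"
    unfolding sum_subtractf[symmetric] by (intro sum.cong refl) (simp add: power_mult_distrib right_diff_distrib mult.commute)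
  also have "\<dots> = poly p x - poly p (z * x)"
    using poly_bound_sum[of p "Suc (degree p)" x] poly_bound_sum[of p "Suc (degree p)" "z*x"] by linarith
  finally have e: "(1 - z) * x * poly (Dz z p) x = poly p x - poly p (z * x)" .
  have "(1 - z) * x \<noteq> 0" using assms by simp
  then show ?thesis using e by (simp add: eq_divide_eq mult.commute)
qed

lemma qn_1: "z \<noteq> 1 \<Longrightarrow> qn z 1 = 1" by (simp add: qn_def)
lemma qn_0: "qn z 0 = 0" by (simp add: qn_def)

lemma qD_poly: assumes "z \<noteq> 1" shows "qD z (poly p) = poly (Dz z p)"
proof
  fix x show "qD z (poly p) x = poly (Dz z p) x"
  proof (cases "x = 0")
    case True
    have "deriv (poly p) 0 = poly (pderiv p) 0" by (rule DERIV_imp_deriv) (rule poly_DERIV)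
    also have "\<dots> = coeff p 1" by (simp add: poly_0_coeff_0 coeff_pderiv)
    finally show ?thesis using True assms by (simp add: qD_def poly_0_coeff_0 coeff_Dz qn_def)
  next
    case False then show ?thesis using assms by (simp add: qD_def poly_Dz)
  qed
qed




lemma coeff_lin_mult: "coeff ([:c0, c1:] * r) k = c0 * coeff r k + (if k = 0 then 0 else c1 * coeff r (k - 1))"
  by (cases k) (simp_all add: coeff_pCons)

definition Lop :: "real \<Rightarrow> real \<Rightarrow> real \<Rightarrow> real \<Rightarrow> real \<Rightarrow> real \<Rightarrow> real poly \<Rightarrow> real poly" where
  "Lop q s1 a1 t0 t1 lam p = smult s1 [:- a1, 1:] * Dz (1/q) (Dz q p) + [:t0, t1:] * Dz q p + smult lam p"

lemma coeff_Lop: "coeff (Lop q s1 a1 t0 t1 lam p) k =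
   (t1 * qn q k + lam) * coeff p k + (s1 * qn (1/q) k + t0) * qn q (k+1) * coeff p (k+1)
   - s1 * a1 * qn (1/q) (k+1) * qn q (k+2) * coeff p (k+2)"
proof (cases k)
  case 0 then show ?thesis
    by (simp add: Lop_def coeff_lin_mult coeff_Dz qn_0 mult_ac algebra_simps)
next
  case (Suc j) then show ?thesis
    by (simp add: Lop_def coeff_lin_mult coeff_Dz mult_ac algebra_simps)
qed

fun gr :: "(nat \<Rightarrow> real) \<Rightarrow> (nat \<Rightarrow> real) \<Rightarrow> (nat \<Rightarrow> real) \<Rightarrow> nat \<Rightarrow> nat \<Rightarrow> real" where
  "gr E B G n 0 = 1"
| "gr E B G n (Suc 0) = - (B (n - 1) * gr E B G n 0) / E (n - 1)"
| "gr E B G n (Suc (Suc i)) = - (B (n - Suc (Suc i)) * gr E B G n (Suc i)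
      + G (n - Suc (Suc i)) * gr E B G n i) / E (n - Suc (Suc i))"

definition cf :: "(nat \<Rightarrow> real) \<Rightarrow> (nat \<Rightarrow> real) \<Rightarrow> (nat \<Rightarrow> real) \<Rightarrow> nat \<Rightarrow> nat \<Rightarrow> real" where
  "cf E B G n k = (if k \<le> n then gr E B G n (n - k) else 0)"

lemma cf_rec: assumes "k < n" "E k \<noteq> 0"
  shows "E k * cf E B G n k + B k * cf E B G n (Suc k) + G k * cf E B G n (Suc (Suc k)) = 0"
proof -
  obtain i where i: "n - k = Suc i" using assms by (metis Suc_diff_Suc)
  show ?thesis
  proof (cases i)
    case 0
    then have k: "k = n - 1" "Suc k = n" using i by auto
    show ?thesis using assms 0 i k by (simp add: cf_def)
  next
    case (Suc j)
    then have "n - Suc k = Suc j" "n - Suc (Suc k) = j" "k = n - Suc (Suc j)" using i by auto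
    then show ?thesis using assms Suc i by (simp add: cf_def)
  qed
qed

definition Pn where "Pn E B G n = Abs_poly (\<lambda>k. if k \<le> n then gr E B G n (n - k) else 0)"

lemma coeff_Pn: "coeff (Pn E B G n) k = cf E B G n k"
  unfolding Pn_def coeff_Abs_poly_If_le cf_def by simp

lemma degree_Pn: "degree (Pn E B G n) = n"
proof (rule antisym)
  show "degree (Pn E B G n) \<le> n" by (rule degree_le) (auto simp: coeff_Pn cf_def)
  show "n \<le> degree (Pn E B G n)" by (rule le_degree) (simp add: coeff_Pn cf_def)
qed

lemma Pn_nz: "Pn E B G n \<noteq> 0"
  using coeff_Pn[of E B G n n] by (auto simp: cf_def)

lemma qn_inj: assumes "0 < q" "q < 1" "qn q m = qn q n" shows "m = n"
proof (rule ccontr)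
  assume "m \<noteq> n"
  then have "q ^ m \<noteq> q ^ n"
  proof (cases "m < n")
    case True then have "q ^ n < q ^ m" using assms by (intro power_strict_decreasing) auto
    then show ?thesis by simp
  next
    case False then have "n < m" using \<open>m \<noteq> n\<close> by simp
    then have "q ^ m < q ^ n" using assms by (intro power_strict_decreasing) auto
    then show ?thesis by simp
  qed
  then show False using assms by (simp add: qn_def)
qed

lemma Lop_Pn:
  fixes q s1 a1 t0 t1 :: real and n :: nat
  assumes q: "0 < q" "q < 1" and t1: "t1 \<noteq> 0"
  defines "E \<equiv> \<lambda>k. t1 * (qn q k - qn q n)"
  defines "B \<equiv> \<lambda>k. (s1 * qn (1/q) k + t0) * qn q (k+1)"
  defines "G \<equiv> \<lambda>k. - (s1 * a1 * qn (1/q) (k+1) * qn q (k+2))"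
  shows "Lop q s1 a1 t0 t1 (- (qn q n * t1)) (Pn E B G n) = 0"
proof (rule poly_eqI)
  fix k
  show "coeff (Lop q s1 a1 t0 t1 (- (qn q n * t1)) (Pn E B G n)) k = coeff 0 k"
  proof (cases "n \<le> k")
    case True
    then show ?thesis by (auto simp: coeff_Lop coeff_Pn cf_def algebra_simps)
  next
    case False
    then have "E k \<noteq> 0" using t1 qn_inj[OF q, of k n] by (auto simp: E_def)
    have "E k * cf E B G n k + B k * cf E B G n (Suc k) + G k * cf E B G n (Suc (Suc k)) = 0"
      by (rule cf_rec) (use False \<open>E k \<noteq> 0\<close> in auto)
    then show ?thesis by (simp add: coeff_Lop coeff_Pn E_def B_def G_def algebra_simps)
  qed
qed




lemma qlambda_eq:
  assumes "\<sigma>1 = smult s1 [:- a1, 1:]" "\<tau> = [:t0, t1:]"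
  shows "qlambda q \<sigma>1 \<tau> n = - (qn q n * t1)"
  using assms by (simp add: qlambda_def qnum_def qn_def pderiv_pCons)

lemma qEHT_Lop:
  assumes q: "0 < q" "q < 1" and "\<sigma>1 = smult s1 [:- a1, 1:]" "\<tau> = [:t0, t1:]"
    and L: "Lop q s1 a1 t0 t1 (- (qn q n * t1)) P = 0"
  shows "qEHT q \<sigma>1 \<tau> n (poly P)"
proof -
  have q1: "q \<noteq> 1" "1/q \<noteq> 1" using q by auto
  have "poly (Lop q s1 a1 t0 t1 (- (qn q n * t1)) P) x = 0" for x using L by simp
  then show ?thesis
    unfolding qEHT_def qlambda_eq[OF assms(3,4)] qD_poly[OF q1(1)] qD_poly[OF q1(2)]
    using assms(3,4) by (simp add: Lop_def algebra_simps)
qed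

lemma cc_aux: fixes d q x N :: real assumes "d \<noteq> 0" "q \<noteq> 0" "x \<noteq> 0"
  shows "(N / (d * x)) / ((- d / q) * x) = - q * N / (d^2 * x^2)"
  using assms by (simp add: field_simps power2_eq_square)

lemma dd_aux: fixes d x N T :: real assumes "d \<noteq> 0" "x \<noteq> 0"
  shows "T * (N / (d * x)) = T * d * x * N / (d^2 * x^2)"
  using assms by (simp add: field_simps power2_eq_square)

lemma tt1: fixes q x S T u v w :: real
  assumes "0 < q" "q \<noteq> 1" "x \<noteq> 0"
  shows "S * (((v - w) / ((1 - q) * x) - (u - v) / ((1 - q) * ((1/q) * x))) / ((1 - 1/q) * x)) + T * ((v - w) / ((1 - q) * x)) =
     q^2 * S / ((1-q)^2 * x^2) * (u - v)
     + q * (S + (1 - 1/q) * x * T) / ((1-q)^2 * x^2) * (w - v)"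
proof -
  have q1: "1 - q \<noteq> 0" "q - 1 \<noteq> 0" using assms by auto
  have a: "(u - v) / ((1 - q) * ((1/q) * x)) = q * (u - v) / ((1 - q) * x)" using assms q1 by (simp add: field_simps)
  have b: "1 - 1/q = - (1 - q) / q" using assms by (simp add: field_simps)
  have c: "((v - w) / ((1 - q) * x) - q * (u - v) / ((1 - q) * x)) / ((- (1 - q) / q) * x)
      = - q * ((v - w) - q * (u - v)) / ((1-q)^2 * x^2)" unfolding diff_divide_distrib[symmetric]
    by (rule cc_aux) (use assms q1 in auto)
  have d: "T * ((v - w) / ((1 - q) * x)) = T * (1 - q) * x * (v - w) / ((1-q)^2 * x^2)"
    by (rule dd_aux) (use assms q1 in auto)
  have e: "q * (S + (- (1 - q) / q) * x * T) = q * S - (1 - q) * x * T" using assms by (simp add: field_simps)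
  let ?D = "(1-q)^2 * x^2"
  have L: "S * (((v - w) / ((1 - q) * x) - (u - v) / ((1 - q) * ((1/q) * x))) / ((1 - 1/q) * x)) + T * ((v - w) / ((1 - q) * x))
     = (S * (- q * ((v - w) - q * (u - v))) + T * (1 - q) * x * (v - w)) / ?D"
    unfolding a b c d by (simp add: add_divide_distrib diff_divide_distrib)
  have R: "q^2 * S / ((1-q)^2 * x^2) * (u - v) + q * (S + (1 - 1/q) * x * T) / ((1-q)^2 * x^2) * (w - v)
     = (q^2 * S * (u - v) + (q * S - (1 - q) * x * T) * (w - v)) / ?D"
    unfolding b e[symmetric] by (simp add: add_divide_distrib)
  show ?thesis unfolding L R by (rule arg_cong[where f="\<lambda>t. t / ?D"]) (simp add: algebra_simps power2_eq_square)
qed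

lemma three_term:
  fixes q x S T :: real and y :: "real \<Rightarrow> real"
  assumes "0 < q" "q \<noteq> 1" "x \<noteq> 0"
  shows "S * qD (1/q) (qD q y) x + T * qD q y x =
     q^2 * S / ((1-q)^2 * x^2) * (y ((1/q) * x) - y x)
     + q * (S + (1 - 1/q) * x * T) / ((1-q)^2 * x^2) * (y (q * x) - y x)"
proof -
  have x': "(1/q) * x \<noteq> 0" using assms by simp
  have e: "q * ((1/q) * x) = x" using assms by simp
  have "qD (1/q) (qD q y) x = (qD q y x - qD q y ((1/q) * x)) / ((1 - 1/q) * x)"
    using assms by (simp add: qD_def)
  also have "qD q y ((1/q) * x) = (y ((1/q) * x) - y x) / ((1 - q) * ((1/q) * x))"
    using x' e by (simp add: qD_def)
  also have qDx: "qD q y x = (y x - y (q * x)) / ((1 - q) * x)"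
    using assms by (simp add: qD_def)
  finally have D: "qD (1/q) (qD q y) x = ((y x - y (q * x)) / ((1 - q) * x) - (y ((1/q) * x) - y x) / ((1 - q) * ((1/q) * x))) / ((1 - 1/q) * x)" .
  show ?thesis unfolding D qDx by (rule tt1[OF assms])
qed




lemma qp_conv: assumes "0 < q" "q < (1::real)" shows "convergent_prod (\<lambda>k. 1 - \<beta> * q ^ k)"
proof -
  have "summable (\<lambda>k. \<bar>\<beta>\<bar> * q ^ k)" using assms by (intro summable_mult summable_geometric) auto
  then have "summable (\<lambda>k. norm ((1 - \<beta> * q ^ k) - 1))"
    using assms by (simp add: abs_mult)
  then show ?thesis by (intro abs_convergent_prod_imp_convergent_prod summable_imp_abs_convergent_prod)
qed

lemma qp_pos: assumes "0 < q" "q < (1::real)" "\<beta> < 1" shows "qpoch_inf \<beta> q > 0"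
proof -
  have "(\<lambda>k. 1 - \<beta> * q ^ k) has_prod qpoch_inf \<beta> q"
    unfolding qpoch_inf_def using qp_conv[OF assms(1,2)] by (rule convergent_prod_has_prod)
  moreover have "1 - \<beta> * q ^ k > 0" for k
  proof (cases "\<beta> \<le> 0")
    case True then show ?thesis using assms by (simp add: mult_nonpos_nonneg) (smt (verit) mult_nonpos_nonneg zero_le_power)
  next
    case False
    have "q ^ k \<le> 1" using assms by (simp add: power_le_one)
    then have "\<beta> * q ^ k \<le> \<beta>" using False by (simp add: mult_left_le)
    then show ?thesis using assms by simp
  qed
  ultimately show ?thesis by (rule has_prod_pos)
qed

lemma qp_shift: assumes "0 < q" "q < (1::real)" "\<beta> \<noteq> 1"
  shows "qpoch_inf \<beta> q = (1 - \<beta>) * qpoch_inf (\<beta> * q) q"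
proof -
  let ?f = "\<lambda>k. 1 - \<beta> * q ^ k"
  have "(\<lambda>k. 1 - (\<beta> * q) * q ^ k) has_prod qpoch_inf (\<beta> * q) q"
    unfolding qpoch_inf_def using qp_conv[OF assms(1,2)] by (rule convergent_prod_has_prod)
  moreover have "(\<lambda>k. 1 - (\<beta> * q) * q ^ k) = (\<lambda>n. ?f (Suc n))" by (simp add: mult_ac)
  ultimately have "(\<lambda>n. ?f (Suc n)) has_prod qpoch_inf (\<beta> * q) q" by simp
  then have "?f has_prod (qpoch_inf (\<beta> * q) q * ?f 0)"
    using has_prod_Suc_iff[of ?f] assms by simp
  then have "qpoch_inf (\<beta> * q) q * ?f 0 = prodinf ?f" by (rule has_prod_unique)
  then show ?thesis by (simp add: qpoch_inf_def mult_ac)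
qed




definition Ew :: "real \<Rightarrow> real \<Rightarrow> real" where "Ew q x = exp (1/2 * (log q x - 1) * ln x)"

lemma Ew_shift: assumes "0 < q" "q < 1" "0 < x" shows "Ew q (x / q) = q / x * Ew q x"
proof -
  have lq: "ln q \<noteq> 0" using assms by simp
  have l: "ln (x / q) = ln x - ln q" using assms by (simp add: ln_div)
  have "1/2 * (log q (x/q) - 1) * ln (x/q) = 1/2 * (log q x - 1) * ln x + (ln q - ln x)"
    unfolding log_def l using lq by (simp add: field_simps)
  then have "Ew q (x / q) = exp (1/2 * (log q x - 1) * ln x + (ln q - ln x))"
    by (simp only: Ew_def)
  also have "\<dots> = exp (1/2 * (log q x - 1) * ln x) * exp (ln q - ln x)" by (rule exp_add)
  also have "exp (ln q - ln x) = q / x" using assms by (simp add: exp_diff)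
  finally show ?thesis by (simp add: Ew_def)
qed

lemma gen_ratio: fixes C u v w E P1 P2 P3 d1 d2 d3 :: real
  assumes "d1 \<noteq> 0" "d2 \<noteq> 0" "d3 \<noteq> 0" "P3 \<noteq> 0"
  shows "C * u * v * (w * E * ((P1 / d1) * (P2 / d2)) / (P3 / d3)) = C * (E * (P1 * P2) / P3) * (u * v * w * d3 / (d1 * d2))"
  using assms by (simp add: field_simps)

lemma gen2: fixes q x s1 K N D1 D2 :: real
  assumes "q \<noteq> 0" "x \<noteq> 0" "K \<noteq> 0" "D1 \<noteq> 0" "D2 \<noteq> 0"
  shows "(1/q) * (q^2 * s1 / K) * (q / x) * (N / x) / ((D1 / x) * (D2 / x)) = q^2 * s1 * N / (K * D1 * D2)"
  using assms by (simp add: field_simps power2_eq_square)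

locale wctx =
  fixes q s1 a1 t1 a2 a :: real
  assumes q0: "0 < q" and q1: "q < 1" and s1: "s1 \<noteq> 0" and t1: "t1 \<noteq> 0"
    and Lam: "t1 / s1 < 0" and a2: "a2 < 0" and a1: "0 < a1" and a1a: "a1 < a"
begin

definition "Q0 = (1 / q ^ 2) * ((q - 1) * t1) / s1"
definition "xx j = (1/q) ^ j * a"
definition "mw j = (1/q - 1) * a * (1/q) ^ j * ((1/Q0) ^ j *
   (Ew q (xx j) * (qpoch_inf (q * a2 / xx j) q * qpoch_inf (q * a / xx j) q) / qpoch_inf (a1 / xx j) q))"
definition "rr x = q^2 * s1 * (x - a1) / ((q - 1) * t1 * (x - q * a2) * (x - q * a))"

lemma a_pos: "0 < a" using a1 a1a by simp

lemma Q0_pos: "0 < Q0"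
proof -
  have "(q - 1) * (t1 / s1) > 0" using Lam q1 by (intro mult_neg_neg) auto
  moreover have "Q0 = (1 / q ^ 2) * ((q - 1) * (t1 / s1))" by (simp add: Q0_def)
  moreover have "0 < 1 / q ^ 2" using q0 by simp
  ultimately show ?thesis by (metis mult_pos_pos)
qed

lemma xx_ge: "a \<le> xx j"
proof -
  have "1 \<le> (1/q) ^ j" using q0 q1 by (simp add: one_le_power)
  then show ?thesis unfolding xx_def using a_pos by (simp add: mult_le_cancel_right1)
qed

lemma xx_pos: "0 < xx j" using xx_ge a_pos by (meson less_le_trans)

lemma xx_Suc: "xx (Suc j) = xx j / q" by (simp add: xx_def)

lemma mw_pos: "0 < mw j"
proof -
  have x: "0 < xx j" by (rule xx_pos)
  have "q * a2 < 0" using q0 a2 by (simp add: mult_pos_neg)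
  then have "q * a2 / xx j < 0" using x by (simp add: divide_neg_pos)
  then have "qpoch_inf (q * a2 / xx j) q > 0"
    using q0 q1 by (intro qp_pos) auto
  moreover have "qpoch_inf (q * a / xx j) q > 0"
  proof (intro qp_pos q0 q1)
    have "q * a / xx j \<le> q * a / a" using xx_ge q0 a_pos x by (intro divide_left_mono) auto
    then show "q * a / xx j < 1" using a_pos q1 by simp
  qed
  moreover have "qpoch_inf (a1 / xx j) q > 0"
  proof (intro qp_pos q0 q1)
    have "a1 / xx j \<le> a1 / a" using xx_ge a1 a_pos x by (intro divide_left_mono) auto
    moreover have "a1 / a < 1" using a1a a_pos by simp
    ultimately show "a1 / xx j < 1" by linarith
  qed
  moreover have "1/q - 1 > 0" using q0 q1 by simp
  moreover have "0 < (1/Q0) ^ j" "0 < (1/q) ^ j" "0 < Ew q (xx j)" using Q0_pos q0 by (auto simp: Ew_def)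
  ultimately show ?thesis unfolding mw_def using a_pos by (intro mult_pos_pos divide_pos_pos) auto
qed

lemma mw_Suc: "mw (Suc j) = mw j * rr (xx j)"
proof -
  define x where "x = xx j"
  have x: "0 < x" "a \<le> x" using xx_pos xx_ge by (auto simp: x_def)
  have "q * a2 < 0" using q0 a2 by (simp add: mult_pos_neg)
  then have "q * a2 / x < 0" using x by (simp add: divide_neg_pos)
  then have b1: "q * a2 / x \<noteq> 1" by linarith
  have b2: "q * a / x \<noteq> 1"
  proof -
    have "q * a / x \<le> q * a / a" using x q0 a_pos by (intro divide_left_mono) auto
    moreover have "q * a / a = q" using a_pos by simp
    ultimately show ?thesis using q1 by linarith
  qed
  have b3': "a1 / x < 1"
  proof -
    have "a1 / x \<le> a1 / a" using x a1 a_pos by (intro divide_left_mono) auto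
    moreover have "a1 / a < 1" using a1a a_pos by simp
    ultimately show ?thesis by linarith
  qed
  then have b3: "a1 / x \<noteq> 1" by linarith
  have e1: "q * a2 / (x / q) = (q * a2 / x) * q" "q * a / (x / q) = (q * a / x) * q" "a1 / (x / q) = (a1 / x) * q"
    using q0 by auto
  have p1: "qpoch_inf (q * a2 / (x / q)) q = qpoch_inf (q * a2 / x) q / (1 - q * a2 / x)"
    unfolding e1 using qp_shift[OF q0 q1 b1] b1 by simp
  have p2: "qpoch_inf (q * a / (x / q)) q = qpoch_inf (q * a / x) q / (1 - q * a / x)"
    unfolding e1 using qp_shift[OF q0 q1 b2] b2 by simp
  have p3: "qpoch_inf (a1 / (x / q)) q = qpoch_inf (a1 / x) q / (1 - a1 / x)"
    unfolding e1 using qp_shift[OF q0 q1 b3] b3 by simp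
  have p3nz: "qpoch_inf (a1 / x) q \<noteq> 0"
    using qp_pos[OF q0 q1 b3'] by simp
  define C where "C = (1/q - 1) * a * (1/q) ^ j * (1/Q0) ^ j"
  define W where "W = Ew q x * (qpoch_inf (q * a2 / x) q * qpoch_inf (q * a / x) q) / qpoch_inf (a1 / x) q"
  have m0: "mw j = C * W" unfolding mw_def C_def W_def x_def by simp
  have "mw (Suc j) = C * (1/q) * (1/Q0) * (q / x * Ew q x * ((qpoch_inf (q * a2 / x) q / (1 - q * a2 / x)) *
      (qpoch_inf (q * a / x) q / (1 - q * a / x))) / (qpoch_inf (a1 / x) q / (1 - a1 / x)))"
    unfolding mw_def xx_Suc x_def[symmetric] p1 p2 p3 Ew_shift[OF q0 q1 x(1)] C_def by (simp add: mult_ac)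
  also have "\<dots> = C * W * ((1/q) * (1/Q0) * (q / x) * (1 - a1 / x) / ((1 - q * a2 / x) * (1 - q * a / x)))"
    unfolding W_def by (rule gen_ratio) (use b1 b2 b3 p3nz in auto)
  also have "(1/q) * (1/Q0) * (q / x) * (1 - a1 / x) / ((1 - q * a2 / x) * (1 - q * a / x)) = rr x"
  proof -
    have n: "x - q * a2 \<noteq> 0" "x - q * a \<noteq> 0" "q - 1 \<noteq> 0" "x \<noteq> 0" "q \<noteq> 0"
      using b1 b2 q0 q1 x by (auto simp: field_simps)
    have h: "1 - a1 / x = (x - a1) / x" "1 - q * a2 / x = (x - q * a2) / x" "1 - q * a / x = (x - q * a) / x"
      "1 / Q0 = q^2 * s1 / ((q - 1) * t1)" using n s1 t1 by (auto simp: Q0_def field_simps)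
    show ?thesis unfolding rr_def h by (rule gen2) (use n t1 in auto)
  qed
  finally show ?thesis using m0 x_def by simp
qed

end



lemma telesc:
  fixes m A B Y Z YP ZP LY LZ :: "nat \<Rightarrow> real"
  assumes B0: "B 0 = 0" and P: "\<And>k. m (Suc k) * B (Suc k) = m k * A k"
    and YP: "\<And>k. YP (Suc k) = Y k" and ZP: "\<And>k. ZP (Suc k) = Z k"
    and LY: "\<And>k. LY k = A k * (Y (Suc k) - Y k) + B k * (YP k - Y k)"
    and LZ: "\<And>k. LZ k = A k * (Z (Suc k) - Z k) + B k * (ZP k - Z k)"
  shows "(\<Sum>k<Suc N. m k * (LY k * Z k - Y k * LZ k)) = m N * A N * (Y (Suc N) * Z N - Z (Suc N) * Y N)"
proof (induction N)
  case 0 then show ?case by (simp add: LY LZ B0 algebra_simps)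
next
  case (Suc N)
  have "(\<Sum>k<Suc (Suc N). m k * (LY k * Z k - Y k * LZ k)) =
     m N * A N * (Y (Suc N) * Z N - Z (Suc N) * Y N) + m (Suc N) * (LY (Suc N) * Z (Suc N) - Y (Suc N) * LZ (Suc N))"
    using Suc by simp
  also have "\<dots> = m N * A N * (Y (Suc N) * Z N - Z (Suc N) * Y N)
     + m (Suc N) * A (Suc N) * (Y (Suc (Suc N)) * Z (Suc N) - Z (Suc (Suc N)) * Y (Suc N))
     + (m (Suc N) * B (Suc N)) * (Y N * Z (Suc N) - Z N * Y (Suc N))"
    unfolding LY LZ YP ZP by (simp add: algebra_simps)
  also have "\<dots> = m (Suc N) * A (Suc N) * (Y (Suc (Suc N)) * Z (Suc N) - Z (Suc (Suc N)) * Y (Suc N))"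
    unfolding P by (simp add: algebra_simps)
  finally show ?case .
qed

lemma gen3: fixes q x s1 K N D1 D2 E :: real
  assumes "q \<noteq> 0" "x \<noteq> 0" "K \<noteq> 0" "D1 \<noteq> 0" "D2 \<noteq> 0" "E \<noteq> 0"
  shows "q^2 * s1 * N / (K * D1 * D2) * (K * (D1 / q) * (D2 / q) / (E * (x / q)^2)) = q^2 * (s1 * N) / (E * x^2)"
  using assms by (simp add: field_simps power2_eq_square)

context wctx begin

definition "kap = q^2 * s1 / ((q - 1) * t1)"

lemma kap_pos: "0 < kap"
proof -
  have "kap = 1 / Q0" unfolding kap_def Q0_def using q0 q1 s1 t1 by (simp add: field_simps)
  then show ?thesis using Q0_pos by simp
qed

lemma rr_le: assumes "a \<le> x" shows "0 \<le> rr x" "rr x \<le> kap / ((1 - q) * x)"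
proof -
  have x: "0 < x" using assms a_pos by simp
  have d1: "x \<le> x - q * a2" using q0 a2 mult_pos_neg[of q a2] by simp
  have d2: "(1 - q) * x \<le> x - q * a"
  proof -
    have "q * a \<le> q * x" using assms q0 by simp
    then show ?thesis by (simp add: algebra_simps)
  qed
  have pos: "0 < x * ((1 - q) * x)" using x q1 by simp
  have le: "x * ((1 - q) * x) \<le> (x - q * a2) * (x - q * a)"
    using d1 d2 x q1 by (intro mult_mono) auto
  have "0 < (1 - q) * x" using x q1 by simp
  then have n: "x - q * a2 \<noteq> 0" "x - q * a \<noteq> 0" "q - 1 \<noteq> 0"
    using d1 d2 x q1 by linarith+
  have r: "rr x = kap * ((x - a1) / ((x - q * a2) * (x - q * a)))"
    unfolding rr_def kap_def using n t1 by (simp add: field_simps)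
  have f1: "(x - a1) / ((x - q * a2) * (x - q * a)) \<le> x / (x * ((1 - q) * x))"
    by (rule frac_le) (use x a1 pos le in auto)
  have f0: "0 \<le> (x - a1) / ((x - q * a2) * (x - q * a))"
    using pos le assms a1a by (intro divide_nonneg_pos) auto
  have "x / (x * ((1 - q) * x)) = 1 / ((1 - q) * x)" using x by simp
  then show "rr x \<le> kap / ((1 - q) * x)" unfolding r using f1 kap_pos
    by (metis mult_left_mono less_imp_le times_divide_eq_right mult_1_right)
  show "0 \<le> rr x" unfolding r using f0 kap_pos by (intro mult_nonneg_nonneg) auto
qed

lemma xx_large: "\<exists>N. \<forall>j\<ge>N. X \<le> xx j"
proof -
  have "1 < 1/q" using q0 q1 by simp
  from real_arch_pow[OF this, of "X / a"] obtain N where N: "X / a < (1/q) ^ N" by blast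
  have "X \<le> xx j" if "j \<ge> N" for j
  proof -
    have "(1/q) ^ N \<le> (1/q) ^ j" using that q0 q1 by (intro power_increasing) auto
    then have "X / a \<le> (1/q) ^ j" using N by simp
    then show ?thesis unfolding xx_def using a_pos by (simp add: pos_divide_le_eq)
  qed
  then show ?thesis by blast
qed

lemma summable_mw: assumes th: "0 < \<theta>" shows "summable (\<lambda>j. mw j * \<theta> ^ j)"
proof -
  obtain N where N: "\<And>j. j \<ge> N \<Longrightarrow> 2 * kap * \<theta> / (1 - q) \<le> xx j" using xx_large by blast
  show ?thesis
  proof (rule summable_ratio_test[of "1/2" N])
    fix n assume n: "N \<le> n"
    have x: "0 < xx n" "a \<le> xx n" using xx_pos xx_ge by auto
    have "kap * \<theta> * 2 \<le> (1 - q) * xx n" using N[OF n] q1 by (simp add: field_simps)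
    then have h: "kap * \<theta> / ((1 - q) * xx n) \<le> 1/2" using x q1 by (simp add: field_simps)
    have "rr (xx n) * \<theta> \<le> kap / ((1 - q) * xx n) * \<theta>"
      by (rule mult_right_mono[OF rr_le(2)[OF x(2)]]) (use th in simp)
    also have "\<dots> \<le> 1/2" using h by simp
    finally have r: "rr (xx n) * \<theta> \<le> 1/2" .
    have "norm (mw (Suc n) * \<theta> ^ Suc n) = mw (Suc n) * \<theta> ^ Suc n"
      using mw_pos[of "Suc n"] th by (simp add: abs_mult)
    also have "\<dots> = mw n * \<theta> ^ n * (rr (xx n) * \<theta>)"
      by (simp add: mw_Suc mult_ac)
    also have "\<dots> \<le> mw n * \<theta> ^ n * (1/2)"
      using r mw_pos[of n] th by (intro mult_left_mono) auto
    also have "\<dots> = 1/2 * norm (mw n * \<theta> ^ n)" using mw_pos[of n] th by (simp add: abs_mult)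
    finally show "norm (mw (Suc n) * \<theta> ^ Suc n) \<le> 1/2 * norm (mw n * \<theta> ^ n)" .
  qed simp
qed

definition "pM p = (\<Sum>i\<le>degree p. \<bar>coeff p i\<bar> * a ^ i)"

lemma poly_bound: "\<bar>poly p (xx j)\<bar> \<le> pM p * ((1/q) ^ degree p) ^ j"
proof -
  have x: "0 \<le> xx j" using xx_pos less_imp_le by blast
  have "\<bar>poly p (xx j)\<bar> = \<bar>\<Sum>i\<le>degree p. coeff p i * xx j ^ i\<bar>" by (simp add: poly_altdef)
  also have "\<dots> \<le> (\<Sum>i\<le>degree p. \<bar>coeff p i * xx j ^ i\<bar>)" by (rule sum_abs)
  also have "\<dots> = (\<Sum>i\<le>degree p. \<bar>coeff p i\<bar> * xx j ^ i)" using x by (simp add: abs_mult)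
  also have "\<dots> \<le> (\<Sum>i\<le>degree p. \<bar>coeff p i\<bar> * a ^ i * ((1/q) ^ degree p) ^ j)"
  proof (rule sum_mono)
    fix i assume i: "i \<in> {..degree p}"
    have "(1/q) ^ i \<le> (1/q) ^ degree p" using i q0 q1 by (intro power_increasing) auto
    then have "((1/q) ^ i) ^ j \<le> ((1/q) ^ degree p) ^ j" using q0 by (intro power_mono) auto
    moreover have "xx j ^ i = a ^ i * ((1/q) ^ i) ^ j"
    proof -
      have "((1/q) ^ j) ^ i = ((1/q) ^ i) ^ j" by (metis power_mult mult.commute)
      then show ?thesis unfolding xx_def power_mult_distrib by simp
    qed
    ultimately have "xx j ^ i \<le> a ^ i * ((1/q) ^ degree p) ^ j"
      using a_pos by (simp add: mult_left_mono)
    then show "\<bar>coeff p i\<bar> * xx j ^ i \<le> \<bar>coeff p i\<bar> * a ^ i * ((1/q) ^ degree p) ^ j"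
      by (simp add: mult_left_mono mult.assoc)
  qed
  also have "\<dots> = pM p * ((1/q) ^ degree p) ^ j" by (simp add: pM_def sum_distrib_right)
  finally show ?thesis .
qed

end




locale wctx2 = wctx +
  fixes t0 :: real
  assumes sigid: "\<And>x. q * (s1 * (x - a1) + (1 - 1/q) * x * (t0 + t1 * x)) = (q - 1) * t1 * (x - a2) * (x - a)"
begin

definition "AA x = q^2 * (s1 * (x - a1)) / ((1 - q)^2 * x^2)"
definition "BB x = (q - 1) * t1 * (x - a2) * (x - a) / ((1 - q)^2 * x^2)"

lemma BB0: "BB (xx 0) = 0" by (simp add: BB_def xx_def)

lemma pearson: "mw (Suc j) * BB (xx (Suc j)) = mw j * AA (xx j)"
proof -
  define x where "x = xx j"
  have x: "0 < x" "a \<le> x" using xx_pos xx_ge by (auto simp: x_def)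
  have d1: "x - q * a2 \<noteq> 0" using x q0 a2 mult_pos_neg[of q a2] by simp
  have d2: "x - q * a \<noteq> 0"
  proof -
    have "q * a < a" using q1 a_pos by simp
    then show ?thesis using x by simp
  qed
  have e: "x / q - a2 = (x - q * a2) / q" "x / q - a = (x - q * a) / q" using q0 by (auto simp: field_simps)
  have "rr x * BB (x / q) = AA x"
    unfolding rr_def BB_def AA_def e
    by (rule gen3) (use q0 q1 x t1 d1 d2 in auto)
  then show ?thesis using mw_Suc[of j] xx_Suc[of j] by (simp add: x_def[symmetric] mult.assoc)
qed

lemma AA_bound: assumes "a \<le> x" shows "\<bar>AA x\<bar> \<le> q^2 * \<bar>s1\<bar> / ((1 - q)^2 * a)"
proof -
  have x: "0 < x" using assms a_pos by simp
  have f: "(x - a1) / x^2 \<le> x / (a * x)"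
    by (rule frac_le) (use x a1 assms a_pos in \<open>auto simp: power2_eq_square intro: mult_right_mono\<close>)
  have "AA x = q^2 * s1 / (1 - q)^2 * ((x - a1) / x^2)"
    unfolding AA_def by simp
  moreover have "0 \<le> (x - a1) / x^2" using x assms a1a by simp
  moreover have "0 \<le> x - a1" using assms a1a by simp
  ultimately have "\<bar>AA x\<bar> = q^2 * \<bar>s1\<bar> / (1 - q)^2 * ((x - a1) / x^2)"
    by (simp add: abs_mult)
  also have "\<dots> \<le> q^2 * \<bar>s1\<bar> / (1 - q)^2 * (x / (a * x))"
    using f by (intro mult_left_mono) auto
  also have "\<dots> = q^2 * \<bar>s1\<bar> / ((1 - q)^2 * a)" using x by simp
  finally show ?thesis .
qed

lemma eig3:
  fixes y :: "real \<Rightarrow> real"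
  assumes "s1 * (x - a1) * qD (1/q) (qD q y) x + (t0 + t1 * x) * qD q y x + lam * y x = 0" "x \<noteq> 0"
  shows "AA x * (y (x / q) - y x) + BB x * (y (q * x) - y x) = - lam * y x"
proof -
  have "s1 * (x - a1) * qD (1/q) (qD q y) x + (t0 + t1 * x) * qD q y x =
     q^2 * (s1 * (x - a1)) / ((1-q)^2 * x^2) * (y ((1/q) * x) - y x)
     + q * (s1 * (x - a1) + (1 - 1/q) * x * (t0 + t1 * x)) / ((1-q)^2 * x^2) * (y (q * x) - y x)"
    by (rule three_term) (use q0 q1 assms in auto)
  then show ?thesis using assms(1) unfolding sigid AA_def BB_def by simp
qed

end



context wctx2 begin

lemma orth:
  fixes y z :: "real \<Rightarrow> real"
  assumes ey: "\<And>j. AA (xx j) * (y (xx j / q) - y (xx j)) + BB (xx j) * (y (q * xx j) - y (xx j)) = - ly * y (xx j)"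
    and ez: "\<And>j. AA (xx j) * (z (xx j / q) - z (xx j)) + BB (xx j) * (z (q * xx j) - z (xx j)) = - lz * z (xx j)"
    and l: "ly \<noteq> lz"
    and hy: "\<And>j. \<bar>y (xx j)\<bar> \<le> My * \<theta>y ^ j" and hz: "\<And>j. \<bar>z (xx j)\<bar> \<le> Mz * \<theta>z ^ j"
    and ty: "0 < \<theta>y" and tz: "0 < \<theta>z"
  shows "(\<lambda>j. mw j * (y (xx j) * z (xx j))) sums 0"
proof -
  define Y where "Y k = y (xx k)" for k
  define Z where "Z k = z (xx k)" for k
  define bd where "bd N = mw N * AA (xx N) * (Y (Suc N) * Z N - Z (Suc N) * Y N)" for N
  have xs: "xx (Suc k) = xx k / q" "q * xx (Suc k) = xx k" for k using q0 by (auto simp: xx_Suc)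
  have T: "(\<Sum>k<Suc N. mw k * ((- ly * Y k) * Z k - Y k * (- lz * Z k))) = bd N" for N
    unfolding bd_def
  proof (rule telesc[where B="\<lambda>k. BB (xx k)" and YP="\<lambda>k. y (q * xx k)" and ZP="\<lambda>k. z (q * xx k)"])
    show "BB (xx 0) = 0" by (rule BB0)
    show "mw (Suc k) * BB (xx (Suc k)) = mw k * AA (xx k)" for k by (rule pearson)
    show "y (q * xx (Suc k)) = Y k" for k unfolding Y_def using xs(2)[of k] by simp
    show "z (q * xx (Suc k)) = Z k" for k unfolding Z_def using xs(2)[of k] by simp
    show "- ly * Y k = AA (xx k) * (Y (Suc k) - Y k) + BB (xx k) * (y (q * xx k) - Y k)" for k
      unfolding Y_def xs using ey[of k] by simp
    show "- lz * Z k = AA (xx k) * (Z (Suc k) - Z k) + BB (xx k) * (z (q * xx k) - Z k)" for k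
      unfolding Z_def xs using ez[of k] by simp
  qed
  have S: "(\<Sum>k<Suc N. mw k * (Y k * Z k)) = bd N / (lz - ly)" for N
  proof -
    have "(\<Sum>k<Suc N. mw k * ((- ly * Y k) * Z k - Y k * (- lz * Z k))) = (lz - ly) * (\<Sum>k<Suc N. mw k * (Y k * Z k))"
      by (simp add: sum_distrib_left algebra_simps)
    then show ?thesis using T[of N] l by (simp add: field_simps)
  qed
  have My: "0 \<le> My" using hy[of 0] by simp
  have Mz: "0 \<le> Mz" using hz[of 0] by simp
  define CA where "CA = q^2 * \<bar>s1\<bar> / ((1 - q)^2 * a)"
  define g where "g N = CA * (My * Mz * (\<theta>y + \<theta>z)) * (mw N * (\<theta>y * \<theta>z) ^ N)" for N
  have g0: "g \<longlonglongrightarrow> 0"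
  proof -
    have "summable (\<lambda>N. mw N * (\<theta>y * \<theta>z) ^ N)" using ty tz by (intro summable_mw) simp
    then have "(\<lambda>N. mw N * (\<theta>y * \<theta>z) ^ N) \<longlonglongrightarrow> 0" by (rule summable_LIMSEQ_zero)
    then show ?thesis unfolding g_def by (rule tendsto_mult_right_zero)
  qed
  have bdle: "norm (bd N) \<le> g N" for N
  proof -
    have CA: "0 \<le> CA" using a_pos by (simp add: CA_def)
    have "\<bar>Y (Suc N) * Z N - Z (Suc N) * Y N\<bar> \<le> \<bar>Y (Suc N)\<bar> * \<bar>Z N\<bar> + \<bar>Z (Suc N)\<bar> * \<bar>Y N\<bar>"
      by (metis abs_mult abs_triangle_ineq4)
    also have "\<dots> \<le> (My * \<theta>y ^ Suc N) * (Mz * \<theta>z ^ N) + (Mz * \<theta>z ^ Suc N) * (My * \<theta>y ^ N)"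
      using hy[of "Suc N"] hy[of N] hz[of "Suc N"] hz[of N] My Mz ty tz unfolding Y_def Z_def
      by (intro add_mono mult_mono) (auto simp del: power_Suc)
    also have "\<dots> = My * Mz * (\<theta>y + \<theta>z) * (\<theta>y * \<theta>z) ^ N" by (simp add: algebra_simps power_mult_distrib)
    finally have D: "\<bar>Y (Suc N) * Z N - Z (Suc N) * Y N\<bar> \<le> My * Mz * (\<theta>y + \<theta>z) * (\<theta>y * \<theta>z) ^ N" .
    have A: "\<bar>AA (xx N)\<bar> \<le> CA" unfolding CA_def by (rule AA_bound[OF xx_ge])
    have "norm (bd N) = mw N * (\<bar>AA (xx N)\<bar> * \<bar>Y (Suc N) * Z N - Z (Suc N) * Y N\<bar>)"
      using mw_pos[of N] by (simp add: bd_def abs_mult)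
    also have "\<dots> \<le> mw N * (CA * (My * Mz * (\<theta>y + \<theta>z) * (\<theta>y * \<theta>z) ^ N))"
      using A D CA mw_pos[of N] by (intro mult_left_mono mult_mono) auto
    also have "\<dots> = g N" by (simp add: g_def mult_ac)
    finally show ?thesis .
  qed
  have "bd \<longlonglongrightarrow> 0" by (rule Lim_null_comparison[OF _ g0]) (use bdle in simp)
  then have "(\<lambda>N. bd N / (lz - ly)) \<longlonglongrightarrow> 0" by (rule tendsto_divide_zero)
  moreover have "(\<lambda>N. \<Sum>k<Suc N. mw k * (Y k * Z k)) = (\<lambda>N. bd N / (lz - ly))"
    using S by (intro ext) (simp only:)
  ultimately have "(\<lambda>N. \<Sum>k<Suc N. mw k * (Y k * Z k)) \<longlonglongrightarrow> 0" by simp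
  then have "(\<lambda>N. \<Sum>k<N. mw k * (Y k * Z k)) \<longlonglongrightarrow> 0" by (rule LIMSEQ_imp_Suc)
  then show ?thesis unfolding sums_def Y_def Z_def .
qed

lemma norm_summable:
  fixes y :: "real \<Rightarrow> real"
  assumes hy: "\<And>j. \<bar>y (xx j)\<bar> \<le> My * \<theta> ^ j" and t: "0 < \<theta>"
  shows "summable (\<lambda>j. mw j * (y (xx j) * y (xx j)))"
proof (rule summable_comparison_test')
  show "summable (\<lambda>j. My^2 * (mw j * (\<theta> * \<theta>) ^ j))"
    using t by (intro summable_mult summable_mw) simp
  fix n :: nat
  have My: "0 \<le> My" using hy[of 0] by simp
  have "norm (mw n * (y (xx n) * y (xx n))) = mw n * (\<bar>y (xx n)\<bar> * \<bar>y (xx n)\<bar>)"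
    using mw_pos[of n] by (simp add: abs_mult)
  also have "\<dots> \<le> mw n * ((My * \<theta> ^ n) * (My * \<theta> ^ n))"
    using hy[of n] mw_pos[of n] by (intro mult_left_mono mult_mono) auto
  also have "\<dots> = My^2 * (mw n * (\<theta> * \<theta>) ^ n)" by (simp add: power2_eq_square power_mult_distrib mult_ac)
  finally show "norm (mw n * (y (xx n) * y (xx n))) \<le> My^2 * (mw n * (\<theta> * \<theta>) ^ n)" .
qed

end



context wctx begin

lemma xx_inj: "inj xx"
proof (rule injI)
  fix i j assume "xx i = xx j"
  then have "(1/q) ^ i = (1/q) ^ j" using a_pos by (simp add: xx_def)
  moreover have "1 < 1/q" using q0 q1 by simp
  ultimately show "i = j" by simp
qed

lemma exists_nonroot: assumes "p \<noteq> 0" shows "\<exists>j. poly p (xx j) \<noteq> 0"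
proof (rule ccontr)
  assume "\<not> ?thesis"
  then have "range xx \<subseteq> {x. poly p x = 0}" by auto
  then have "finite (range xx)" using poly_roots_finite[OF assms] by (rule finite_subset)
  then show False using range_inj_infinite[OF xx_inj] by simp
qed

lemma rho_lattice:
  assumes alpha: "exp (\<alpha> * complex_of_real (ln q)) = complex_of_real Q0"
  shows "complex_of_real ((1/q - 1) * a * (1/q) ^ j) * (complex_of_real F * rho_w q \<alpha> a1 a2 a ((1/q) ^ j * a))
     = exp (\<alpha> * complex_of_real (ln a)) * complex_of_real (mw j * F)"
proof -
  have x: "(1/q) ^ j * a = xx j" by (simp add: xx_def)
  have l: "ln \<bar>xx j\<bar> = ln a - real j * ln q"
  proof -
    have "ln \<bar>xx j\<bar> = ln ((1/q) ^ j) + ln a" using xx_pos a_pos q0 by (simp add: xx_def ln_mult)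
    also have "ln ((1/q) ^ j) = real j * ln (1/q)" using q0 by (simp add: ln_realpow)
    also have "ln (1/q) = - ln q" using q0 by (simp add: ln_div)
    finally show ?thesis by simp
  qed
  have "\<alpha> * complex_of_real (ln \<bar>xx j\<bar>) = \<alpha> * complex_of_real (ln a) - of_nat j * (\<alpha> * complex_of_real (ln q))"
    unfolding l by (simp add: algebra_simps)
  then have "exp (\<alpha> * complex_of_real (ln \<bar>xx j\<bar>)) = exp (\<alpha> * complex_of_real (ln a)) / exp (\<alpha> * complex_of_real (ln q)) ^ j"
    by (simp add: exp_diff exp_of_nat_mult)
  also have "\<dots> = exp (\<alpha> * complex_of_real (ln a)) * complex_of_real ((1/Q0) ^ j)"
    unfolding alpha by (simp add: power_one_over divide_inverse of_real_inverse power_inverse)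
  finally have E: "exp (\<alpha> * complex_of_real (ln \<bar>xx j\<bar>)) = exp (\<alpha> * complex_of_real (ln a)) * complex_of_real ((1/Q0) ^ j)" .
  show ?thesis unfolding x rho_w_def E mw_def Ew_def
    by (simp add: mult_ac)
qed

end



theorem theorem5p2:
  fixes q s1 a1 t0 t1 a2 b2 a :: real and \<alpha> :: complex
    and \<sigma>1 \<tau> \<sigma>2 :: "real poly"
  assumes q: "0 < q" "q < 1"
    and s1: "s1 \<noteq> 0" and a1: "a1 \<noteq> 0"
    and sig1: "\<sigma>1 = smult s1 [:- a1, 1:]"
    and tau: "\<tau> = [:t0, t1:]" and t1: "t1 \<noteq> 0"
    and sig2: "\<sigma>2 = smult q (\<sigma>1 + smult (1 - 1/q) ([:0, 1:] * \<tau>))"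
    and sig2_fact: "\<sigma>2 = smult ((q - 1) * t1) ([:- a2, 1:] * [:- b2, 1:])"
    and zeros: "a2 < 0" "0 < a1" "a1 < b2"
    and Lam: "t1 / s1 < 0"
    and a_def: "a = b2"
    and alpha: "exp (\<alpha> * complex_of_real (ln q)) = complex_of_real ((1 / q ^ 2) * ((q - 1) * t1) / s1)"
  shows "\<exists>P :: nat \<Rightarrow> real poly. \<exists>d :: nat \<Rightarrow> complex.
           (\<forall>n. P n \<noteq> 0 \<and> degree (P n) = n \<and> qEHT q \<sigma>1 \<tau> n (poly (P n)))
         \<and> (\<forall>n. d n \<noteq> 0)
         \<and> (\<forall>m n. has_qint_inf q a
                    (\<lambda>x. complex_of_real (poly (P n) x * poly (P m) x) * rho_w q \<alpha> a1 a2 a x)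
                    (if m = n then d n else 0))"
proof -
  have sigid: "q * (s1 * (x - a1) + (1 - 1/q) * x * (t0 + t1 * x)) = (q - 1) * t1 * (x - a2) * (x - a)" for x
  proof -
    have "poly \<sigma>2 x = q * (s1 * (x - a1) + (1 - 1/q) * x * (t0 + t1 * x))"
      unfolding sig2 sig1 tau by (simp add: algebra_simps)
    moreover have "poly \<sigma>2 x = (q - 1) * t1 * (x - a2) * (x - a)"
      unfolding sig2_fact a_def by (simp add: algebra_simps)
    ultimately show ?thesis by simp
  qed
  interpret W: wctx2 q s1 a1 t1 a2 a t0
    by unfold_locales (use q s1 t1 Lam zeros a_def sigid in auto)
  define E where "E n k = t1 * (qn q k - qn q n)" for n k
  define B where "B k = (s1 * qn (1/q) k + t0) * qn q (k+1)" for k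
  define G where "G k = - (s1 * a1 * qn (1/q) (k+1) * qn q (k+2))" for k
  define P where "P n = Pn (E n) B G n" for n
  have LP: "Lop q s1 a1 t0 t1 (- (qn q n * t1)) (P n) = 0" for n
    unfolding P_def E_def B_def G_def by (rule Lop_Pn) (use q t1 in auto)
  have qE: "qEHT q \<sigma>1 \<tau> n (poly (P n))" for n
    by (rule qEHT_Lop[OF q sig1 tau LP])
  have lam: "qlambda q \<sigma>1 \<tau> n = - (qn q n * t1)" for n by (rule qlambda_eq[OF sig1 tau])
  have eig: "W.AA (W.xx j) * (poly (P n) (W.xx j / q) - poly (P n) (W.xx j))
      + W.BB (W.xx j) * (poly (P n) (q * W.xx j) - poly (P n) (W.xx j)) = - (- (qn q n * t1)) * poly (P n) (W.xx j)" for n j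
  proof (rule W.eig3)
    show "W.xx j \<noteq> 0" using W.xx_pos[of j] by simp
    have "poly \<sigma>1 x * qD (1/q) (qD q (poly (P n))) x + poly \<tau> x * qD q (poly (P n)) x
       + qlambda q \<sigma>1 \<tau> n * poly (P n) x = 0" for x using qE[of n] unfolding qEHT_def by blast
    then have h: "poly \<sigma>1 (W.xx j) * qD (1/q) (qD q (poly (P n))) (W.xx j) + poly \<tau> (W.xx j) * qD q (poly (P n)) (W.xx j)
       + - (qn q n * t1) * poly (P n) (W.xx j) = 0" unfolding lam .
    show "s1 * (W.xx j - a1) * qD (1/q) (qD q (poly (P n))) (W.xx j) + (t0 + t1 * W.xx j) * qD q (poly (P n)) (W.xx j)
       + - (qn q n * t1) * poly (P n) (W.xx j) = 0"
      using h unfolding sig1 tau by (simp add: algebra_simps)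
  qed
  have bnd: "\<bar>poly (P n) (W.xx j)\<bar> \<le> W.pM (P n) * ((1/q) ^ degree (P n)) ^ j" for n j
    by (rule W.poly_bound)
  have th: "0 < (1/q) ^ degree (P n)" for n using q by simp
  have ldist: "- (qn q n * t1) \<noteq> - (qn q m * t1)" if "m \<noteq> n" for m n
    using qn_inj[OF q, of n m] t1 that by auto
  define S where "S n = suminf (\<lambda>j. W.mw j * (poly (P n) (W.xx j) * poly (P n) (W.xx j)))" for n
  define K where "K = exp (\<alpha> * complex_of_real (ln a))"
  define d where "d n = K * complex_of_real (S n)" for n
  have alpha': "exp (\<alpha> * complex_of_real (ln q)) = complex_of_real W.Q0"
    unfolding alpha W.Q0_def ..
  have summ: "summable (\<lambda>j. W.mw j * (poly (P n) (W.xx j) * poly (P n) (W.xx j)))" for n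
    by (rule W.norm_summable[OF bnd th])
  have Spos: "0 < S n" for n
  proof -
    obtain j where j: "poly (P n) (W.xx j) \<noteq> 0"
      using W.exists_nonroot[of "P n"] Pn_nz unfolding P_def by blast
    show ?thesis unfolding S_def
    proof (rule suminf_pos2[OF summ])
      show "0 \<le> W.mw i * (poly (P n) (W.xx i) * poly (P n) (W.xx i))" for i
        using W.mw_pos[of i] by simp
      show "0 < W.mw j * (poly (P n) (W.xx j) * poly (P n) (W.xx j))"
        using W.mw_pos[of j] j not_real_square_gt_zero mult_pos_pos by metis
    qed
  qed
  have main: "has_qint_inf q a (\<lambda>x. complex_of_real (poly (P n) x * poly (P m) x) * rho_w q \<alpha> a1 a2 a x)
                    (if m = n then d n else 0)" for m n
  proof -
    have R: "(\<lambda>j. complex_of_real ((1/q - 1) * a * (1/q) ^ j) * (complex_of_real (poly (P n) ((1/q) ^ j * a) * poly (P m) ((1/q) ^ j * a))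
        * rho_w q \<alpha> a1 a2 a ((1/q) ^ j * a)))
      = (\<lambda>j. K * complex_of_real (W.mw j * (poly (P n) (W.xx j) * poly (P m) (W.xx j))))"
      unfolding K_def W.rho_lattice[OF alpha'] by (simp add: W.xx_def)
    have "(\<lambda>j. W.mw j * (poly (P n) (W.xx j) * poly (P m) (W.xx j))) sums (if m = n then S n else 0)"
    proof (cases "m = n")
      case True then show ?thesis using summ[of n] by (simp add: S_def summable_sums)
    next
      case False
      have "(\<lambda>j. W.mw j * (poly (P n) (W.xx j) * poly (P m) (W.xx j))) sums 0"
        by (rule W.orth[OF eig eig ldist[OF False] bnd bnd th th])
      then show ?thesis using False by simp
    qed
    then have "(\<lambda>j. complex_of_real (W.mw j * (poly (P n) (W.xx j) * poly (P m) (W.xx j)))) sums complex_of_real (if m = n then S n else 0)"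
      by (simp only: sums_of_real_iff)
    then have "(\<lambda>j. K * complex_of_real (W.mw j * (poly (P n) (W.xx j) * poly (P m) (W.xx j)))) sums (K * complex_of_real (if m = n then S n else 0))"
      by (rule sums_mult)
    moreover have e: "(if m = n then d n else 0) = K * complex_of_real (if m = n then S n else 0)" by (simp add: d_def)
    ultimately show ?thesis unfolding has_qint_inf_def R e by simp
  qed
  show ?thesis
  proof (intro exI[of _ P] exI[of _ d] conjI allI)
    fix n
    show "P n \<noteq> 0" unfolding P_def by (rule Pn_nz)
    show "degree (P n) = n" unfolding P_def by (rule degree_Pn)
    show "qEHT q \<sigma>1 \<tau> n (poly (P n))" by (rule qE)
    show "d n \<noteq> 0" using Spos[of n] by (simp add: d_def K_def)
  next
    fix m n show "has_qint_inf q a (\<lambda>x. complex_of_real (poly (P n) x * poly (P m) x) * rho_w q \<alpha> a1 a2 a x)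
                    (if m = n then d n else 0)" by (rule main)
  qed
qed


end
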